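(* Let $P^{(1)},\dots,P^{(m)}$ be phase-free $n$-qubit Pauli strings in sparse form, each of weight at most $k$. In the computational model where dictionary lookup and update for a key of length $r$ cost $O(r)$ expected time, the certification-with-witness algorithm (process $i=1,\dots,m$: compute $c=(N-Z)/2$ with $Z=\sum_{A\subseteq\operatorname{supp}(P^{(i)})}(-2)^{|A|}\sum_{a\in\mathcal{L}_{P^{(i)}}(A)}D[(A,a)]$; if $c>0$ scan $j<i$ for the first $j$ with $|\operatorname{conf}(P^{(j)},P^{(i)})|$ odd and return $(j,i)$; otherwise increment $D[(A,P^{(i)}|_A)]$ for all $A\subseteq\operatorname{supp}(P^{(i)})$ and increment $N$; if the loop ends return ``all commute'') returns either a correct all-commuting certificate (all strings pairwise commute) or a correct anticommuting witness pair, in expected time $O(mk3^k)$.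
   Context: A phase-free $n$-qubit Pauli string is $P=(P_1,\dots,P_n)\in\{I,X,Y,Z\}^n$ with $I,X,Y,Z$ the identity and Pauli matrices, identified with $P_1\otimes\cdots\otimes P_n$, stored sparsely as pairs $(j,P_j)$ for $j\in\operatorname{supp}(P)=\{j:P_j\neq I\}$; its weight is $|\operatorname{supp}(P)|$. $\operatorname{conf}(P,Q)=\{j:P_j\neq I, Q_j\neq I, P_j\neq Q_j\}$. $D$ is a dictionary (initially empty, absent keys zero) keyed by labeled patterns $(A,a)$, $A$ a set of positions and $a:A\to\{X,Y,Z\}$; $N$ starts at $0$. $\mathcal{L}_P(A)=\{a:A\to\{X,Y,Z\}: a(j)\neq P_j\ \forall j\in A\}$, and $P|_A$ is $j\mapsto P_j$ on $A$. *)

theory Defs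
  imports Complex_Main "Jordan_Normal_Form.Matrix"
begin

datatype pauli = PI | PX | PY | PZ

definition pauli_mat :: "pauli \<Rightarrow> complex mat" where
  "pauli_mat p = (case p of
      PI \<Rightarrow> mat_of_rows_list 2 [[1, 0], [0, 1]]
    | PX \<Rightarrow> mat_of_rows_list 2 [[0, 1], [1, 0]]
    | PY \<Rightarrow> mat_of_rows_list 2 [[0, - \<i>], [\<i>, 0]]
    | PZ \<Rightarrow> mat_of_rows_list 2 [[1, 0], [0, -1]])"

type_synonym sparse = "(nat \<times> pauli) list"

definition valid_sparse :: "nat \<Rightarrow> sparse \<Rightarrow> bool" where
  "valid_sparse n P \<longleftrightarrow> distinct (map fst P) \<and> (\<forall>(j, p) \<in> set P. j < n \<and> p \<noteq> PI)"

definition pfun :: "sparse \<Rightarrow> nat \<Rightarrow> pauli" where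
  "pfun P j = (case map_of P j of Some p \<Rightarrow> p | None \<Rightarrow> PI)"

definition weight :: "sparse \<Rightarrow> nat" where
  "weight P = card {j. pfun P j \<noteq> PI}"

text \<open>The operator P_0 \<otimes> ... \<otimes> P_{n-1} acting on (C^2)^{\<otimes> n}; basis index x < 2^n
  has j-th bit (x div 2^j) mod 2.\<close>
definition pauli_op :: "nat \<Rightarrow> sparse \<Rightarrow> complex mat" where
  "pauli_op n P = mat (2 ^ n) (2 ^ n)
     (\<lambda>(x, y). \<Prod>j<n. pauli_mat (pfun P j) $$ ((x div 2 ^ j) mod 2, (y div 2 ^ j) mod 2))"

definition ops_commute :: "nat \<Rightarrow> sparse \<Rightarrow> sparse \<Rightarrow> bool" where
  "ops_commute n P Q \<longleftrightarrow> pauli_op n P * pauli_op n Q = pauli_op n Q * pauli_op n P"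

definition conf :: "sparse \<Rightarrow> sparse \<Rightarrow> nat set" where
  "conf P Q = {j. pfun P j \<noteq> PI \<and> pfun Q j \<noteq> PI \<and> pfun P j \<noteq> pfun Q j}"

text \<open>Dictionary keys: labeled patterns (A, a), with a represented as a function that is
  the identity outside A.\<close>
type_synonym key = "nat set \<times> (nat \<Rightarrow> pauli)"
type_synonym dict = "key \<Rightarrow> int"

definition key_of :: "sparse \<Rightarrow> key" where
  "key_of L = (set (map fst L), pfun L)"

text \<open>All labelings a \<in> L_P(A) of a sublist A of a sparse string (a(j) \<noteq> P_j).\<close>
fun labs :: "sparse \<Rightarrow> sparse list" where
  "labs [] = [[]]"
| "labs ((j, p) # r) =
     concat (map (\<lambda>q. map ((#) (j, q)) (labs r)) (filter (\<lambda>q. q \<noteq> p) [PX, PY, PZ]))"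

definition zval :: "dict \<Rightarrow> sparse \<Rightarrow> int" where
  "zval D P = sum_list (map (\<lambda>A. sum_list (map (\<lambda>a. (-2) ^ length A * D (key_of a)) (labs A)))
                          (subseqs P))"

definition dict_upd :: "dict \<Rightarrow> sparse \<Rightarrow> dict" where
  "dict_upd D P = foldl (\<lambda>D' A. D'(key_of A := D' (key_of A) + 1)) D (subseqs P)"

text \<open>Cost model: a dictionary lookup / update with a key of length r costs r + 1
  (this also pays for generating the key); other steps cost O(1).\<close>
definition query_cost :: "sparse \<Rightarrow> nat" where
  "query_cost P = sum_list (map (\<lambda>A. sum_list (map (\<lambda>a. length a + 1) (labs A))) (subseqs P)) + 1"

definition upd_cost :: "sparse \<Rightarrow> nat" where
  "upd_cost P = sum_list (map (\<lambda>A. length A + 1) (subseqs P)) + 1"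

text \<open>Scan earlier strings (index j onwards) for the first one with odd conflict set;
  computing conf(Q,P) from sparse forms costs |Q| + |P| + 1.\<close>
fun scan :: "sparse list \<Rightarrow> sparse \<Rightarrow> nat \<Rightarrow> nat option \<times> nat" where
  "scan [] P j = (None, 1)"
| "scan (Q # Qs) P j =
     (if odd (card (conf Q P)) then (Some j, length Q + length P + 1)
      else (let (r, c) = scan Qs P (Suc j) in (r, length Q + length P + 1 + c)))"

datatype result = AllCommute | Witness nat nat | NoWitness

text \<open>Main loop: processed strings (in order), remaining strings, D, N.
  Returns the result and the total cost. Indices are 0-based.\<close>
fun cert_loop :: "sparse list \<Rightarrow> sparse list \<Rightarrow> dict \<Rightarrow> int \<Rightarrow> result \<times> nat" where
  "cert_loop done [] D N = (AllCommute, 1)"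
| "cert_loop done (P # rest) D N =
     (let c = (N - zval D P) div 2 in
      if c > 0 then
        (let (r, cs) = scan done P 0 in
          ((case r of Some j \<Rightarrow> Witness j (length done) | None \<Rightarrow> NoWitness),
           query_cost P + cs))
      else
        (let (res, cst) = cert_loop (done @ [P]) rest (dict_upd D P) (N + 1) in
          (res, query_cost P + upd_cost P + cst)))"

definition certify :: "sparse list \<Rightarrow> result \<times> nat" where
  "certify Ps = cert_loop [] Ps (\<lambda>_. 0) 0"

end

theory Submission
  imports Defs
begin


lemma mrl: "mat_of_rows_list nc rs \<in> carrier_mat (length rs) nc"
  unfolding mat_of_rows_list_def by (rule mat_carrier)
lemma mrl_idx: "i < length rs \<Longrightarrow> j < nc \<Longrightarrow> mat_of_rows_list nc rs $$ (i,j) = rs ! i ! j"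
  unfolding mat_of_rows_list_def by simp

lemma pm_carrier[simp]: "pauli_mat p \<in> carrier_mat 2 2"
proof -
  have h: "mat_of_rows_list 2 [[a::complex,b],[c,d]] \<in> carrier_mat 2 2" for a b c d
    using mrl[of 2 "[[a,b],[c,d]]"] by (simp add: numeral_2_eq_2)
  show ?thesis unfolding pauli_mat_def by (cases p) (simp_all only: pauli.case h)
qed

lemma pm_dims[simp]: "dim_row (pauli_mat p) = 2" "dim_col (pauli_mat p) = 2"
  using pm_carrier[of p] unfolding carrier_mat_def by auto

lemma pm00: "pauli_mat p $$ (0,0) = (case p of PI \<Rightarrow> 1 | PX \<Rightarrow> 0 | PY \<Rightarrow> 0 | PZ \<Rightarrow> 1)"
  by (cases p; simp add: pauli_mat_def mrl_idx)
lemma pm01: "pauli_mat p $$ (0,Suc 0) = (case p of PI \<Rightarrow> 0 | PX \<Rightarrow> 1 | PY \<Rightarrow> - \<i> | PZ \<Rightarrow> 0)"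
  by (cases p; simp add: pauli_mat_def mrl_idx)
lemma pm10: "pauli_mat p $$ (Suc 0,0) = (case p of PI \<Rightarrow> 0 | PX \<Rightarrow> 1 | PY \<Rightarrow> \<i> | PZ \<Rightarrow> 0)"
  by (cases p; simp add: pauli_mat_def mrl_idx)
lemma pm11: "pauli_mat p $$ (Suc 0,Suc 0) = (case p of PI \<Rightarrow> 1 | PX \<Rightarrow> 0 | PY \<Rightarrow> 0 | PZ \<Rightarrow> -1)"
  by (cases p; simp add: pauli_mat_def mrl_idx)


lemma mult2: "A \<in> carrier_mat 2 2 \<Longrightarrow> B \<in> carrier_mat 2 2 \<Longrightarrow> a < 2 \<Longrightarrow> c < 2 \<Longrightarrow>
  (A * B) $$ (a,c) = A $$ (a,0) * B $$ (0,c) + A $$ (a,Suc 0) * B $$ (Suc 0,c)"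
  by (auto simp: scalar_prod_def numeral_2_eq_2)

definition sg :: "pauli \<Rightarrow> pauli \<Rightarrow> complex" where
  "sg p q = (if p \<noteq> PI \<and> q \<noteq> PI \<and> p \<noteq> q then -1 else 1)"

lemma pm_comm: assumes "a < 2" "c < 2" shows
  "(pauli_mat p * pauli_mat q) $$ (a,c) = sg p q * (pauli_mat q * pauli_mat p) $$ (a,c)"
proof -
  have "a = 0 \<or> a = Suc 0" "c = 0 \<or> c = Suc 0" using assms by auto
  then show ?thesis
    apply (simp del: index_mult_mat add: mult2[OF pm_carrier pm_carrier assms])
    by (cases p; cases q; elim disjE; simp add: pm00 pm01 pm10 pm11 sg_def)
qed

lemma pm_sq: "((pauli_mat p * pauli_mat q) * (pauli_mat q * pauli_mat p)) $$ (0,0) = 1"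
proof -
  have c: "pauli_mat p * pauli_mat q \<in> carrier_mat 2 2" "pauli_mat q * pauli_mat p \<in> carrier_mat 2 2"
    using mult_carrier_mat[OF pm_carrier pm_carrier] by auto
  show ?thesis
    apply (simp del: index_mult_mat add: mult2[OF c] mult2[OF pm_carrier pm_carrier])
    by (cases p; cases q; simp add: pm00 pm01 pm10 pm11)
qed



definition bitf :: "nat \<Rightarrow> nat \<Rightarrow> nat" where "bitf j x = (x div 2 ^ j) mod 2"

definition tens :: "nat \<Rightarrow> (nat \<Rightarrow> complex mat) \<Rightarrow> complex mat" where
  "tens n f = mat (2 ^ n) (2 ^ n) (\<lambda>(x, y). \<Prod>j<n. f j $$ (bitf j x, bitf j y))"

lemma pauli_op_tens: "pauli_op n P = tens n (\<lambda>j. pauli_mat (pfun P j))"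
  unfolding pauli_op_def tens_def bitf_def by simp

lemma sum_double: "(\<Sum>y<2*M. h y) = (\<Sum>y<M. h (2*y) + h (2*y+1))"
  for h :: "nat \<Rightarrow> 'a::comm_monoid_add"
proof (induction M)
  case 0 then show ?case by simp
next
  case (Suc M)
  have "2 * Suc M = Suc (Suc (2*M))" by simp
  then show ?case using Suc by (simp add: add.assoc)
qed

lemma bitf_0: "bitf 0 y = y mod 2" by (simp add: bitf_def)
lemma bitf_Suc: "bitf (Suc j) y = bitf j (y div 2)"
  by (simp add: bitf_def div_mult2_eq)

lemma bits_sum: "(\<Sum>y<2^n. \<Prod>j<n. g j (bitf j y)) = (\<Prod>j<n. (g j 0 + g j 1 :: complex))"
proof (induction n arbitrary: g)
  case 0 then show ?case by simp
next
  case (Suc n)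
  have "(\<Sum>y<2^Suc n. \<Prod>j<Suc n. g j (bitf j y))
      = (\<Sum>y<2*2^n. g 0 (y mod 2) * (\<Prod>j<n. g (Suc j) (bitf j (y div 2))))"
    by (simp only: power_Suc prod.lessThan_Suc_shift bitf_0 bitf_Suc)
  also have "\<dots> = (\<Sum>y<2^n. g 0 0 * (\<Prod>j<n. g (Suc j) (bitf j y)) + g 0 1 * (\<Prod>j<n. g (Suc j) (bitf j y)))"
    by (simp add: sum_double)
  also have "\<dots> = (g 0 0 + g 0 1) * (\<Sum>y<2^n. \<Prod>j<n. g (Suc j) (bitf j y))"
    by (simp add: sum.distrib sum_distrib_left algebra_simps)
  also have "\<dots> = (g 0 0 + g 0 1) * (\<Prod>j<n. g (Suc j) 0 + g (Suc j) 1)"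
    using Suc.IH[of "\<lambda>j. g (Suc j)"] by simp
  also have "\<dots> = (\<Prod>j<Suc n. g j 0 + g j 1)"
    by (simp only: prod.lessThan_Suc_shift)
  finally show ?case .

qed

lemma bitf_lt: "bitf j x < 2" by (simp add: bitf_def)

lemma tens_mult:
  assumes "\<And>j. f j \<in> carrier_mat 2 2" "\<And>j. g j \<in> carrier_mat 2 2"
  shows "tens n f * tens n g = tens n (\<lambda>j. f j * g j)"
proof (rule eq_matI)
  fix x z assume xz: "x < dim_row (tens n (\<lambda>j. f j * g j))" "z < dim_col (tens n (\<lambda>j. f j * g j))"
  then have x: "x < 2^n" and z: "z < 2^n" by (auto simp: tens_def)
  have "(tens n f * tens n g) $$ (x,z) = (\<Sum>y<2^n. tens n f $$ (x,y) * tens n g $$ (y,z))"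
    using x z by (simp add: tens_def scalar_prod_def atLeast0LessThan)
  also have "\<dots> = (\<Sum>y<2^n. \<Prod>j<n. f j $$ (bitf j x, bitf j y) * g j $$ (bitf j y, bitf j z))"
    using x z by (intro sum.cong refl) (simp add: tens_def prod.distrib)
  also have "\<dots> = (\<Prod>j<n. f j $$ (bitf j x, 0) * g j $$ (0, bitf j z) + f j $$ (bitf j x, 1) * g j $$ (1, bitf j z))"
    by (rule bits_sum)
  also have "\<dots> = (\<Prod>j<n. (f j * g j) $$ (bitf j x, bitf j z))"
    using mult2[OF assms(1) assms(2) bitf_lt bitf_lt] by (intro prod.cong refl) simp
  also have "\<dots> = tens n (\<lambda>j. f j * g j) $$ (x,z)"
    using x z by (simp add: tens_def)
  finally show "(tens n f * tens n g) $$ (x,z) = tens n (\<lambda>j. f j * g j) $$ (x,z)" .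
qed (auto simp: tens_def)



lemma pm_mult_carrier: "pauli_mat p * pauli_mat q \<in> carrier_mat 2 2"
  using mult_carrier_mat[OF pm_carrier pm_carrier] by auto

lemma comm_entry:
  assumes "x < 2^n" "z < 2^n"
  shows "(pauli_op n P * pauli_op n Q) $$ (x,z) =
    (\<Prod>j<n. sg (pfun P j) (pfun Q j)) * (pauli_op n Q * pauli_op n P) $$ (x,z)"
proof -
  have "(pauli_op n P * pauli_op n Q) $$ (x,z) =
      (\<Prod>j<n. (pauli_mat (pfun P j) * pauli_mat (pfun Q j)) $$ (bitf j x, bitf j z))"
    unfolding pauli_op_tens tens_mult[OF pm_carrier pm_carrier] using assms by (simp add: tens_def)
  also have "\<dots> = (\<Prod>j<n. sg (pfun P j) (pfun Q j) * (pauli_mat (pfun Q j) * pauli_mat (pfun P j)) $$ (bitf j x, bitf j z))"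
    by (intro prod.cong refl pm_comm bitf_lt)
  also have "\<dots> = (\<Prod>j<n. sg (pfun P j) (pfun Q j)) * (pauli_op n Q * pauli_op n P) $$ (x,z)"
    unfolding pauli_op_tens tens_mult[OF pm_carrier pm_carrier] using assms by (simp add: tens_def prod.distrib)
  finally show ?thesis .
qed

lemma mult_entry: "A \<in> carrier_mat N N \<Longrightarrow> B \<in> carrier_mat N N \<Longrightarrow> x < N \<Longrightarrow> z < N \<Longrightarrow>
  (A * B) $$ (x,z) = (\<Sum>y<N. A $$ (x,y) * B $$ (y,z))"
  by (simp add: scalar_prod_def atLeast0LessThan)

lemma pop_carrier: "pauli_op n P \<in> carrier_mat (2^n) (2^n)"
  by (simp add: pauli_op_def)

lemma conf_sym: "conf P Q = conf Q P"
  unfolding conf_def by auto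

lemma sg_conf: "sg (pfun P j) (pfun Q j) = (if j \<in> conf P Q then -1 else 1)"
  unfolding sg_def conf_def by auto

lemma prod_sign: "(\<Prod>j<(n::nat). (if j \<in> C then -1 else 1 :: complex)) = (-1) ^ card ({..<n} \<inter> C)"
proof (induction n)
  case (Suc n)
  have "{..<Suc n} \<inter> C = (if n \<in> C then insert n ({..<n} \<inter> C) else {..<n} \<inter> C)"
    by (auto simp: less_Suc_eq)
  then show ?case using Suc by simp
qed simp

lemma pfun_nonI: "pfun P j \<noteq> PI \<Longrightarrow> \<exists>p. (j, p) \<in> set P \<and> pfun P j = p"
  unfolding pfun_def by (auto split: option.splits dest: map_of_SomeD)

lemma conf_sub: assumes "valid_sparse n P" shows "conf P Q \<subseteq> {..<n}"
proof
  fix j assume "j \<in> conf P Q"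
  then have "pfun P j \<noteq> PI" by (simp add: conf_def)
  then obtain p where "(j,p) \<in> set P" using pfun_nonI by blast
  then show "j \<in> {..<n}" using assms by (auto simp: valid_sparse_def)
qed

lemma prod_sg: assumes "valid_sparse n P"
  shows "(\<Prod>j<n. sg (pfun P j) (pfun Q j)) = (-1) ^ card (conf P Q)"
proof -
  have "{..<n} \<inter> conf P Q = conf P Q" using conf_sub[OF assms] by auto
  then show ?thesis by (simp add: sg_conf prod_sign)
qed

lemma even_comm: assumes "valid_sparse n P" "even (card (conf P Q))"
  shows "ops_commute n P Q"
  unfolding ops_commute_def
proof (rule eq_matI)
  fix x z assume "x < dim_row (pauli_op n Q * pauli_op n P)" "z < dim_col (pauli_op n Q * pauli_op n P)"
  then have "x < 2^n" "z < 2^n" by (auto simp: pauli_op_def)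
  from comm_entry[OF this, of P Q]
  show "(pauli_op n P * pauli_op n Q) $$ (x,z) = (pauli_op n Q * pauli_op n P) $$ (x,z)"
    unfolding prod_sg[OF assms(1)] using assms(2) by simp
qed (auto simp: pauli_op_def)

lemma odd_noncomm: assumes "valid_sparse n P" "odd (card (conf P Q))"
  shows "\<not> ops_commute n P Q"
proof
  assume c: "ops_commute n P Q"
  have z: "(pauli_op n P * pauli_op n Q) $$ (x,z) = 0" if "x < 2^n" "z < 2^n" for x z
  proof -
    have "(pauli_op n P * pauli_op n Q) $$ (x,z) = - (pauli_op n Q * pauli_op n P) $$ (x,z)"
      using comm_entry[OF that, of P Q] unfolding prod_sg[OF assms(1)] using assms(2) by simp
    then show ?thesis using c unfolding ops_commute_def by simp
  qed
  have "((pauli_op n P * pauli_op n Q) * (pauli_op n Q * pauli_op n P)) $$ (0,0) =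
     (\<Sum>y<2^n. (pauli_op n P * pauli_op n Q) $$ (0,y) * (pauli_op n Q * pauli_op n P) $$ (y,0))"
    by (rule mult_entry) (auto intro: mult_carrier_mat pop_carrier)
  also have "\<dots> = 0" using z by simp
  finally have e0: "((pauli_op n P * pauli_op n Q) * (pauli_op n Q * pauli_op n P)) $$ (0,0) = 0" .
  have "((pauli_op n P * pauli_op n Q) * (pauli_op n Q * pauli_op n P)) =
    tens n (\<lambda>j. (pauli_mat (pfun P j) * pauli_mat (pfun Q j)) * (pauli_mat (pfun Q j) * pauli_mat (pfun P j)))"
    unfolding pauli_op_tens tens_mult[OF pm_carrier pm_carrier] by (rule tens_mult[OF pm_mult_carrier pm_mult_carrier])
  moreover have "tens n (\<lambda>j. (pauli_mat (pfun P j) * pauli_mat (pfun Q j)) * (pauli_mat (pfun Q j) * pauli_mat (pfun P j))) $$ (0,0) = 1"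
    unfolding tens_def bitf_def by (simp only: index_mat zero_less_power zero_less_numeral prod.neutral div_0 mod_0 pm_sq case_prod_conv) simp
  ultimately show False using e0 by simp
qed



definition nonI :: "sparse \<Rightarrow> bool" where "nonI L \<longleftrightarrow> (\<forall>(j,p)\<in>set L. p \<noteq> PI)"

definition match :: "sparse \<Rightarrow> key \<Rightarrow> bool" where
  "match Q k \<longleftrightarrow> (\<forall>j\<in>fst k. pfun Q j \<noteq> PI) \<and> (\<forall>j. snd k j = (if j \<in> fst k then pfun Q j else PI))"

definition ind :: "sparse \<Rightarrow> key \<Rightarrow> int" where "ind Q k = (if match Q k then 1 else 0)"

lemma sum_list_concat': "sum_list (concat xss) = sum_list (map sum_list xss)"
  for xss :: "'a::comm_monoid_add list list"
  by (induction xss) simp_all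

lemma pfun_Nil: "pfun [] = (\<lambda>_. PI)" by (simp add: pfun_def fun_eq_iff)

lemma pfun_Cons: "pfun ((j,p)#L) = (pfun L)(j:=p)"
  by (simp add: pfun_def fun_eq_iff)

lemma pfun_notin: "j \<notin> fst ` set L \<Longrightarrow> pfun L j = PI"
proof -
  assume "j \<notin> fst ` set L"
  then have "map_of L j = None" by (simp add: map_of_eq_None_iff)
  then show ?thesis by (simp add: pfun_def)
qed

lemma key_of_Cons: "key_of ((j,p)#L) = (insert j (fst ` set L), (pfun L)(j:=p))"
  by (simp add: key_of_def pfun_Cons)

lemma key_of_Nil: "key_of [] = ({}, \<lambda>_. PI)"
  by (simp add: key_of_def pfun_Nil)

lemma subseqs_set: "A \<in> set (subseqs P) \<Longrightarrow> set A \<subseteq> set P"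
  using subseqs_powset[of P] by blast

lemma labs_fst: "a \<in> set (labs A) \<Longrightarrow> map fst a = map fst A"
  by (induction A arbitrary: a rule: labs.induct) auto

lemma labs_len: "nonI A \<Longrightarrow> length (labs A) = 2 ^ length A"
proof (induction A)
  case Nil then show ?case by simp
next
  case (Cons x r)
  obtain j p where x: "x = (j,p)" by fastforce
  then have "p \<noteq> PI" "nonI r" using Cons.prems by (auto simp: nonI_def)
  then show ?case using Cons.IH x by (cases p) (simp_all add: length_concat sum_list_triv comp_def)
qed

lemma match_Cons:
  assumes "j \<notin> fst ` set Q'" "p \<noteq> PI"
  shows "match ((j,p)#Q') (S,f) \<longleftrightarrow>
    (if j \<in> S then f j = p \<and> match Q' (S - {j}, f(j:=PI)) else match Q' (S,f))"
proof -
  define g where "g = pfun Q'"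
  have g: "g j = PI" using pfun_notin[OF assms(1)] g_def by simp
  show ?thesis
  proof (cases "j \<in> S")
    case True
    have e1: "(\<forall>i\<in>S. (g(j:=p)) i \<noteq> PI) \<longleftrightarrow> (\<forall>i\<in>S-{j}. g i \<noteq> PI)"
      using True assms(2) by auto
    have e2: "(\<forall>i. f i = (if i\<in>S then (g(j:=p)) i else PI)) \<longleftrightarrow>
       f j = p \<and> (\<forall>i. (f(j:=PI)) i = (if i\<in>S-{j} then g i else PI))"
    proof
      assume a: "\<forall>i. f i = (if i\<in>S then (g(j:=p)) i else PI)"
      have "f j = p" using a True by simp
      moreover have "(f(j:=PI)) i = (if i\<in>S-{j} then g i else PI)" for i
        using a[rule_format, of i] by (cases "i = j") auto
      ultimately show "f j = p \<and> (\<forall>i. (f(j:=PI)) i = (if i\<in>S-{j} then g i else PI))" by blast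
    next
      assume a: "f j = p \<and> (\<forall>i. (f(j:=PI)) i = (if i\<in>S-{j} then g i else PI))"
      show "\<forall>i. f i = (if i\<in>S then (g(j:=p)) i else PI)"
      proof
        fix i show "f i = (if i\<in>S then (g(j:=p)) i else PI)"
          using a True conjunct2[OF a, rule_format, of i] by (cases "i = j") auto
      qed
    qed
    show ?thesis using True unfolding match_def pfun_Cons fst_conv snd_conv g_def[symmetric] e1 e2
      by (simp only: if_True) blast
  next
    case False
    have e1: "(\<forall>i\<in>S. (g(j:=p)) i \<noteq> PI) \<longleftrightarrow> (\<forall>i\<in>S. g i \<noteq> PI)"
      using False by auto
    have e2: "(\<forall>i. f i = (if i\<in>S then (g(j:=p)) i else PI)) \<longleftrightarrow>
       (\<forall>i. f i = (if i\<in>S then g i else PI))"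
    proof -
      have "(if i\<in>S then (g(j:=p)) i else PI) = (if i\<in>S then g i else PI)" for i
        using False by auto
      then show ?thesis by simp
    qed
    show ?thesis using False unfolding match_def pfun_Cons fst_conv snd_conv g_def[symmetric] e1 e2
      by simp
  qed
qed

lemma match_notin: "j \<notin> fst ` set Q' \<Longrightarrow> j \<in> S \<Longrightarrow> \<not> match Q' (S,f)"
  using pfun_notin unfolding match_def by auto

lemma pair_upd:
  assumes "j \<notin> T" "h j = PI"
  shows "((insert j T, h(j:=p)) = (S,f)) \<longleftrightarrow> (j \<in> S \<and> f j = p \<and> (T,h) = (S-{j}, f(j:=PI)))"
proof
  assume a: "(insert j T, h(j:=p)) = (S,f)"
  then have S: "S = insert j T" and f: "f = h(j:=p)" by auto
  have "f(j:=PI) = h" using f assms(2) by (simp add: fun_eq_iff)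
  moreover have "S - {j} = T" using S assms(1) by auto
  ultimately show "j \<in> S \<and> f j = p \<and> (T,h) = (S-{j}, f(j:=PI))" using S f by simp
next
  assume a: "j \<in> S \<and> f j = p \<and> (T,h) = (S-{j}, f(j:=PI))"
  then have T: "T = S - {j}" and h: "h = f(j:=PI)" by auto
  have "insert j T = S" using T a by auto
  moreover have "h(j:=p) = f" using h a by (simp add: fun_eq_iff)
  ultimately show "(insert j T, h(j:=p)) = (S,f)" by simp
qed

lemma key_of_def': "key_of B = (fst ` set B, pfun B)" by (simp add: key_of_def)

lemma cnt_ind:
  assumes "distinct (map fst Q)" "nonI Q"
  shows "int (length (filter (\<lambda>B. key_of B = k) (subseqs Q))) = ind Q k"
  using assms
proof (induction Q arbitrary: k)
  case Nil
  obtain S f where k: "k = (S,f)" by fastforce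
  have "match [] (S,f) \<longleftrightarrow> (({}, \<lambda>_. PI) = (S,f))"
    unfolding match_def pfun_Nil by (auto simp: fun_eq_iff)
  then show ?case unfolding k by (simp add: key_of_Nil ind_def)
next
  case (Cons x Q')
  obtain j p where x: "x = (j,p)" by fastforce
  obtain S f where k: "k = (S,f)" by fastforce
  have jn: "j \<notin> fst ` set Q'" and d: "distinct (map fst Q')" using Cons.prems x by auto
  have p: "p \<noteq> PI" and n: "nonI Q'" using Cons.prems x by (auto simp: nonI_def)
  have IH: "\<And>k. int (length (filter (\<lambda>B. key_of B = k) (subseqs Q'))) = ind Q' k"
    using Cons.IH d n by blast
  have eq: "key_of ((j,p)#B) = (S,f) \<longleftrightarrow> (j \<in> S \<and> f j = p \<and> key_of B = (S - {j}, f(j:=PI)))"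
    if "B \<in> set (subseqs Q')" for B
  proof -
    have "j \<notin> fst ` set B" using subseqs_set[OF that] jn by auto
    then have "pfun B j = PI" by (rule pfun_notin)
    then show ?thesis using \<open>j \<notin> fst ` set B\<close> unfolding key_of_Cons unfolding key_of_def'
      by (rule pair_upd[rotated])
  qed
  have "length (filter (\<lambda>B. key_of B = (S,f)) (map ((#) (j,p)) (subseqs Q'))) =
        length (filter (\<lambda>B. j \<in> S \<and> f j = p \<and> key_of B = (S - {j}, f(j:=PI))) (subseqs Q'))"
    unfolding filter_map length_map comp_def by (intro arg_cong[where f=length] filter_cong refl) (simp add: eq)
  also have "\<dots> = (if j \<in> S \<and> f j = p then length (filter (\<lambda>B. key_of B = (S - {j}, f(j:=PI))) (subseqs Q')) else 0)"
    by (cases "j \<in> S \<and> f j = p") (auto simp: filter_empty_conv)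
  finally have e1: "int (length (filter (\<lambda>B. key_of B = (S,f)) (map ((#) (j,p)) (subseqs Q')))) =
      (if j \<in> S \<and> f j = p then ind Q' (S - {j}, f(j:=PI)) else 0)"
    using IH by simp
  have "int (length (filter (\<lambda>B. key_of B = k) (subseqs (x#Q')))) =
     int (length (filter (\<lambda>B. key_of B = (S,f)) (map ((#) (j,p)) (subseqs Q')))) + ind Q' (S,f)"
    unfolding x k using IH[of "(S,f)"] by (simp add: Let_def)
  also have "\<dots> = ind (x#Q') k"
  proof (cases "j \<in> S")
    case True
    then show ?thesis unfolding e1 x k ind_def using match_Cons[OF jn p, of S f] match_notin[OF jn, of S f] by simp
  next
    case False
    then show ?thesis unfolding e1 x k ind_def using match_Cons[OF jn p, of S f] by simp
  qed
  finally show ?case .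
qed



definition zA :: "dict \<Rightarrow> sparse \<Rightarrow> int" where
  "zA D A = sum_list (map (\<lambda>a. (-2) ^ length A * D (key_of a)) (labs A))"

lemma zval_zA: "zval D P = sum_list (map (zA D) (subseqs P))"
  unfolding zval_def zA_def by simp

lemma ind_Cons_key:
  assumes "j \<notin> fst ` set a" "q \<noteq> PI"
  shows "ind Q (key_of ((j,q)#a)) = (if pfun Q j = q then ind Q (key_of a) else 0)"
proof -
  define T where "T = fst ` set a"
  define h where "h = pfun a"
  define R where "R = pfun Q"
  have jT: "j \<notin> T" using assms T_def by simp
  have hj: "h j = PI" using pfun_notin[OF assms(1)] h_def by simp
  have "match Q (insert j T, h(j:=q)) \<longleftrightarrow> R j = q \<and> match Q (T,h)"
  proof
    assume a: "match Q (insert j T, h(j:=q))"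
    then have a1: "\<forall>i\<in>insert j T. R i \<noteq> PI" and a2: "\<forall>i. (h(j:=q)) i = (if i \<in> insert j T then R i else PI)"
      unfolding match_def R_def by auto
    have "R j = q" using a2[rule_format, of j] by simp
    moreover have "\<forall>i\<in>T. R i \<noteq> PI" using a1 by auto
    moreover have "h i = (if i \<in> T then R i else PI)" for i
      using a2[rule_format, of i] hj jT by (cases "i = j") auto
    ultimately show "R j = q \<and> match Q (T,h)" unfolding match_def R_def by auto
  next
    assume a: "R j = q \<and> match Q (T,h)"
    then have a1: "\<forall>i\<in>T. R i \<noteq> PI" and a2: "\<forall>i. h i = (if i \<in> T then R i else PI)" and rq: "R j = q"
      unfolding match_def R_def by auto
    have "\<forall>i\<in>insert j T. R i \<noteq> PI" using a1 rq assms(2) by auto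
    moreover have "(h(j:=q)) i = (if i \<in> insert j T then R i else PI)" for i
      using a2[rule_format, of i] rq by (cases "i = j") auto
    ultimately show "match Q (insert j T, h(j:=q))" unfolding match_def R_def by auto
  qed
  moreover have "key_of ((j,q)#a) = (insert j T, h(j:=q))" "key_of a = (T,h)"
    unfolding key_of_Cons T_def h_def by (simp_all add: key_of_def)
  ultimately show ?thesis unfolding ind_def R_def by simp
qed

lemma sum_filt:
  assumes "p \<noteq> PI"
  shows "sum_list (map (\<lambda>q. if r = q then c else 0) (filter (\<lambda>q. q \<noteq> p) [PX, PY, PZ])) =
    (if r \<noteq> PI \<and> r \<noteq> p then c else (0::int))"
  using assms by (cases p; cases r; simp)

lemma zA_Cons:
  assumes "j \<notin> fst ` set A" "p \<noteq> PI"
  shows "zA (ind Q) ((j,p)#A) = (if pfun Q j \<noteq> PI \<and> pfun Q j \<noteq> p then -2 * zA (ind Q) A else 0)"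
proof -
  let ?F = "filter (\<lambda>q. q \<noteq> p) [PX, PY, PZ]"
  have "zA (ind Q) ((j,p)#A) = sum_list (map (\<lambda>q. sum_list (map (\<lambda>a. (-2) ^ Suc (length A) * ind Q (key_of ((j,q)#a))) (labs A))) ?F)"
    unfolding zA_def by (simp add: map_concat sum_list_concat' comp_def)
  also have "\<dots> = sum_list (map (\<lambda>q. if pfun Q j = q then -2 * zA (ind Q) A else 0) ?F)"
  proof (intro arg_cong[where f=sum_list] map_cong refl)
    fix q assume "q \<in> set ?F"
    then have q: "q \<noteq> PI" by (cases p) auto
    have "sum_list (map (\<lambda>a. (-2) ^ Suc (length A) * ind Q (key_of ((j,q)#a))) (labs A)) =
      sum_list (map (\<lambda>a. if pfun Q j = q then -2 * ((-2) ^ length A * ind Q (key_of a)) else 0) (labs A))"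
    proof (intro arg_cong[where f=sum_list] map_cong refl)
      fix a assume "a \<in> set (labs A)"
      then have "fst ` set a = fst ` set A" using labs_fst by (metis set_map)
      then have "j \<notin> fst ` set a" using assms(1) by simp
      then show "(-2) ^ Suc (length A) * ind Q (key_of ((j,q)#a)) =
          (if pfun Q j = q then -2 * ((-2) ^ length A * ind Q (key_of a)) else 0)"
        using ind_Cons_key[OF _ q] by simp
    qed
    also have "\<dots> = (if pfun Q j = q then -2 * zA (ind Q) A else 0)"
    proof (cases "pfun Q j = q")
      case True
      have "sum_list (map (\<lambda>a. -2 * ((-2) ^ length A * ind Q (key_of a))) (labs A)) =
         -2 * sum_list (map (\<lambda>a. (-2) ^ length A * ind Q (key_of a)) (labs A))"
        by (rule sum_list_const_mult)
      then show ?thesis using True unfolding zA_def by simp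
    qed simp
    finally show "sum_list (map (\<lambda>a. (-2) ^ Suc (length A) * ind Q (key_of ((j,q)#a))) (labs A)) =
       (if pfun Q j = q then -2 * zA (ind Q) A else 0)" .
  qed
  also have "\<dots> = (if pfun Q j \<noteq> PI \<and> pfun Q j \<noteq> p then -2 * zA (ind Q) A else 0)"
    by (rule sum_filt[OF assms(2)])
  finally show ?thesis .
qed

lemma conf_Nil: "conf Q [] = {}" by (simp add: conf_def pfun_Nil)

lemma conf_Cons:
  assumes "j \<notin> fst ` set P"
  shows "conf Q ((j,p)#P) = (if pfun Q j \<noteq> PI \<and> p \<noteq> PI \<and> pfun Q j \<noteq> p then insert j (conf Q P) else conf Q P)"
  using pfun_notin[OF assms] unfolding conf_def pfun_Cons by auto

lemma conf_fin: "finite (conf Q P)"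
proof -
  have "conf Q P \<subseteq> fst ` set P"
  proof
    fix j assume "j \<in> conf Q P"
    then have "pfun P j \<noteq> PI" by (simp add: conf_def)
    then show "j \<in> fst ` set P" using pfun_notin by blast
  qed
  then show ?thesis by (rule finite_subset) simp
qed

lemma zval_ind:
  assumes "distinct (map fst P)" "nonI P"
  shows "zval (ind Q) P = (-1) ^ card (conf Q P)"
  using assms
proof (induction P)
  case Nil
  have "match Q ({}, \<lambda>_. PI)" by (simp add: match_def)
  then show ?case by (simp add: zval_def key_of_Nil ind_def conf_Nil)
next
  case (Cons x P)
  obtain j p where x: "x = (j,p)" by fastforce
  have jn: "j \<notin> fst ` set P" and d: "distinct (map fst P)" using Cons.prems x by auto
  have p: "p \<noteq> PI" and n: "nonI P" using Cons.prems x by (auto simp: nonI_def)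
  define c where "c = (pfun Q j \<noteq> PI \<and> pfun Q j \<noteq> p)"
  have "zval (ind Q) (x#P) = sum_list (map (\<lambda>A. zA (ind Q) ((j,p)#A)) (subseqs P)) + zval (ind Q) P"
    unfolding zval_zA x by (simp add: Let_def comp_def)
  also have "sum_list (map (\<lambda>A. zA (ind Q) ((j,p)#A)) (subseqs P)) =
      sum_list (map (\<lambda>A. (if c then -2 else 0) * zA (ind Q) A) (subseqs P))"
  proof (intro arg_cong[where f=sum_list] map_cong refl)
    fix A assume "A \<in> set (subseqs P)"
    then have "j \<notin> fst ` set A" using subseqs_set jn by blast
    then show "zA (ind Q) ((j,p)#A) = (if c then -2 else 0) * zA (ind Q) A"
      using zA_Cons[OF _ p] c_def by simp
  qed
  also have "\<dots> = (if c then -2 else 0) * zval (ind Q) P"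
    unfolding zval_zA by (simp add: sum_list_const_mult)
  finally have "zval (ind Q) (x#P) = (if c then -1 else 1) * zval (ind Q) P" by simp
  also have "\<dots> = (if c then -1 else 1) * (-1) ^ card (conf Q P)" using Cons.IH d n by simp
  also have "\<dots> = (-1) ^ card (conf Q (x#P))"
  proof -
    have "j \<notin> conf Q P" using pfun_notin[OF jn] by (simp add: conf_def)
    then show ?thesis unfolding x conf_Cons[OF jn] using p c_def conf_fin[of Q P] by auto
  qed
  finally show ?case .
qed



definition dsum :: "sparse list \<Rightarrow> dict" where
  "dsum L = (\<lambda>k. sum_list (map (\<lambda>Q. ind Q k) L))"

lemma foldl_cnt: "foldl (\<lambda>D' A. D'(key_of A := D' (key_of A) + 1)) D L k =
   D k + int (length (filter (\<lambda>B. key_of B = k) L))"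
  by (induction L arbitrary: D) auto

lemma dict_upd_dsum:
  assumes "distinct (map fst P)" "nonI P"
  shows "dict_upd (dsum L) P = dsum (L @ [P])"
proof
  fix k
  show "dict_upd (dsum L) P k = dsum (L @ [P]) k"
    unfolding dict_upd_def foldl_cnt cnt_ind[OF assms] by (simp add: dsum_def)
qed

lemma zval_add: "zval (\<lambda>k. D k + E k) P = zval D P + zval E P"
  unfolding zval_def by (simp add: sum_list_addf distrib_left)

lemma zval_zero: "zval (\<lambda>_. 0) P = 0"
  unfolding zval_def by simp

lemma zval_dsum: "zval (dsum L) P = sum_list (map (\<lambda>Q. zval (ind Q) P) L)"
proof (induction L)
  case Nil
  have "dsum [] = (\<lambda>_. 0)" by (simp add: dsum_def)
  then show ?case by (simp add: zval_zero)
next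
  case (Cons Q L)
  have "dsum (Q#L) = (\<lambda>k. ind Q k + dsum L k)" by (simp add: dsum_def fun_eq_iff)
  then show ?case using Cons by (simp add: zval_add)
qed

lemma count_anti:
  assumes "distinct (map fst P)" "nonI P"
  shows "int (length L) - zval (dsum L) P = 2 * int (length (filter (\<lambda>Q. odd (card (conf Q P))) L))"
proof (induction L)
  case Nil then show ?case by (simp add: zval_dsum)
next
  case (Cons Q L)
  have "zval (ind Q) P = (if odd (card (conf Q P)) then -1 else 1)"
    using zval_ind[OF assms] by simp
  then show ?case using Cons by (simp add: zval_dsum)
qed

lemma scan_cost:
  assumes "\<forall>Q\<in>set L. length Q \<le> k" "length P \<le> k"
  shows "snd (scan L P j) \<le> length L * (2*k+1) + 1"
  using assms
proof (induction L arbitrary: j)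
  case Nil then show ?case by simp
next
  case (Cons Q L)
  obtain r c where rc: "scan L P (Suc j) = (r,c)" by fastforce
  have "c \<le> length L * (2*k+1) + 1" using Cons rc by (metis list.set_intros(2) snd_conv)
  moreover have "length Q \<le> k" using Cons.prems by simp
  ultimately show ?case using rc Cons.prems by (auto simp: algebra_simps)
qed

lemma scan_found:
  assumes "\<exists>Q\<in>set L. odd (card (conf Q P))"
  shows "\<exists>j'. fst (scan L P j0) = Some j' \<and> j0 \<le> j' \<and> j' < j0 + length L \<and> odd (card (conf (L!(j'-j0)) P))"
  using assms
proof (induction L arbitrary: j0)
  case Nil then show ?case by simp
next
  case (Cons Q L)
  show ?case
  proof (cases "odd (card (conf Q P))")
    case True then show ?thesis by simp
  next
    case False
    then have "\<exists>Q\<in>set L. odd (card (conf Q P))" using Cons.prems by auto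
    from Cons.IH[OF this, of "Suc j0"] obtain j' where
      j': "fst (scan L P (Suc j0)) = Some j'" "Suc j0 \<le> j'" "j' < Suc j0 + length L" "odd (card (conf (L!(j'-Suc j0)) P))"
      by blast
    obtain r c where rc: "scan L P (Suc j0) = (r,c)" by fastforce
    have "(Q#L) ! (j' - j0) = L ! (j' - Suc j0)" using j'(2)
      by (metis Suc_diff_Suc Suc_le_lessD nth_Cons_Suc)
    then show ?thesis using False j' rc by auto
  qed
qed



definition okq :: "nat \<Rightarrow> sparse \<Rightarrow> bool" where
  "okq k Q \<longleftrightarrow> distinct (map fst Q) \<and> nonI Q \<and> length Q \<le> k"

lemma loop:
  assumes "\<forall>Q\<in>set dn \<union> set rest. okq k Q"
    "\<forall>Q\<in>set dn. \<forall>Q'\<in>set dn. even (card (conf Q Q'))"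
    "\<forall>P\<in>set rest. query_cost P + upd_cost P \<le> B"
  shows "((fst (cert_loop dn rest (dsum dn) (int (length dn))) = AllCommute \<and>
           (\<forall>Q\<in>set (dn@rest). \<forall>Q'\<in>set (dn@rest). even (card (conf Q Q'))))
    \<or> (\<exists>j i. fst (cert_loop dn rest (dsum dn) (int (length dn))) = Witness j i \<and> j < i \<and> i < length (dn@rest)
          \<and> odd (card (conf ((dn@rest)!j) ((dn@rest)!i)))))
   \<and> snd (cert_loop dn rest (dsum dn) (int (length dn))) \<le> length rest * B + (length dn + length rest) * (2*k+1) + 1"
  using assms
proof (induction rest arbitrary: dn)
  case Nil then show ?case by simp
next
  case (Cons P rest)
  have okP: "okq k P" using Cons.prems(1) by simp
  then have dP: "distinct (map fst P)" and nP: "nonI P" and lP: "length P \<le> k" by (auto simp: okq_def)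
  have lQ: "\<forall>Q\<in>set dn. length Q \<le> k" using Cons.prems(1) by (auto simp: okq_def)
  have BP: "query_cost P + upd_cost P \<le> B" using Cons.prems(3) by simp
  define c where "c = (int (length dn) - zval (dsum dn) P) div 2"
  have c: "c = int (length (filter (\<lambda>Q. odd (card (conf Q P))) dn))"
    unfolding c_def count_anti[OF dP nP] by simp
  show ?case
  proof (cases "c > 0")
    case True
    then have ex: "\<exists>Q\<in>set dn. odd (card (conf Q P))" unfolding c
      by (metis filter_False length_0_conv of_nat_0 order_less_irrefl)
    obtain r cs where rc: "scan dn P 0 = (r,cs)" by fastforce
    from scan_found[OF ex, of 0] obtain j' where
      j': "r = Some j'" "j' < length dn" "odd (card (conf (dn!j') P))" using rc by auto
    have cs: "cs \<le> length dn * (2*k+1) + 1" using scan_cost[OF lQ lP, of 0] rc by simp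
    have cl: "cert_loop dn (P#rest) (dsum dn) (int (length dn)) = (Witness j' (length dn), query_cost P + cs)"
      using True rc j'(1) by (simp add: c_def[symmetric] Let_def)
    have n1: "(dn @ P # rest) ! j' = dn ! j'" using j'(2) by (simp add: nth_append)
    have n2: "(dn @ P # rest) ! (length dn) = P" by simp
    have "query_cost P + cs \<le> length (P#rest) * B + (length dn + length (P#rest)) * (2*k+1) + 1"
      using BP cs by (simp add: algebra_simps)
    then show ?thesis unfolding cl using j' n1 n2 by auto
  next
    case False
    then have none: "\<forall>Q\<in>set dn. even (card (conf Q P))" unfolding c
      by (simp add: filter_empty_conv)
    obtain res cst where rc: "cert_loop (dn @ [P]) rest (dsum (dn @ [P])) (int (length (dn @ [P]))) = (res, cst)"
      by fastforce
    have cl: "cert_loop dn (P#rest) (dsum dn) (int (length dn)) = (res, query_cost P + upd_cost P + cst)"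
      using False rc by (simp add: c_def[symmetric] Let_def dict_upd_dsum[OF dP nP] add.commute)
    have a1: "\<forall>Q\<in>set (dn @ [P]) \<union> set rest. okq k Q" using Cons.prems(1) by auto
    have a2: "\<forall>Q\<in>set (dn @ [P]). \<forall>Q'\<in>set (dn @ [P]). even (card (conf Q Q'))"
    proof -
      have "conf P P = {}" by (auto simp: conf_def)
      then show ?thesis using Cons.prems(2) none conf_sym by auto
    qed
    have a3: "\<forall>P\<in>set rest. query_cost P + upd_cost P \<le> B" using Cons.prems(3) by simp
    note IH = Cons.IH[OF a1 a2 a3, unfolded rc fst_conv snd_conv]
    have "query_cost P + upd_cost P + cst \<le> length (P#rest) * B + (length dn + length (P#rest)) * (2*k+1) + 1"
      using IH BP by (simp add: algebra_simps)
    then show ?thesis unfolding cl using IH by auto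
  qed
qed



lemma subseqs_len: "A \<in> set (subseqs P) \<Longrightarrow> length A \<le> length P"
  by (induction P arbitrary: A) (auto simp: Let_def le_SucI)

lemma sum_pow2_subseqs: "sum_list (map (\<lambda>A. 2 ^ length A) (subseqs P)) = (3::nat) ^ length P"
proof (induction P)
  case Nil then show ?case by simp
next
  case (Cons x P)
  have "sum_list (map (\<lambda>A. 2 ^ length A) (subseqs (x#P))) =
    sum_list (map (\<lambda>A. 2 * 2 ^ length A) (subseqs P)) + sum_list (map (\<lambda>A. (2::nat) ^ length A) (subseqs P))"
    by (simp add: Let_def comp_def)
  also have "\<dots> = 3 * sum_list (map (\<lambda>A. (2::nat) ^ length A) (subseqs P))"
    by (simp only: sum_list_const_mult)
  finally show ?case using Cons by simp
qed

lemma nonI_sub: "nonI P \<Longrightarrow> set A \<subseteq> set P \<Longrightarrow> nonI A"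
  unfolding nonI_def by auto

lemma query_bound:
  assumes "nonI P" "length P \<le> k"
  shows "query_cost P \<le> (k+1) * 3^k + 1"
proof -
  have "sum_list (map (\<lambda>A. sum_list (map (\<lambda>a. length a + 1) (labs A))) (subseqs P)) \<le>
        sum_list (map (\<lambda>A. (k+1) * 2 ^ length A) (subseqs P))"
  proof (rule sum_list_mono)
    fix A assume A: "A \<in> set (subseqs P)"
    have nA: "nonI A" using nonI_sub[OF assms(1) subseqs_set[OF A]] .
    have "sum_list (map (\<lambda>a. length a + 1) (labs A)) = sum_list (map (\<lambda>a. length A + 1) (labs A))"
      by (intro arg_cong[where f=sum_list] map_cong refl) (metis labs_fst length_map)
    also have "\<dots> = 2 ^ length A * (length A + 1)"
      by (simp add: sum_list_triv labs_len[OF nA])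
    also have "\<dots> \<le> 2 ^ length A * (k + 1)"
      using subseqs_len[OF A] assms(2) by simp
    finally show "sum_list (map (\<lambda>a. length a + 1) (labs A)) \<le> (k+1) * 2 ^ length A"
      by (simp add: mult.commute)
  qed
  also have "\<dots> = (k+1) * 3 ^ length P"
    by (simp only: sum_list_const_mult sum_pow2_subseqs)
  also have "\<dots> \<le> (k+1) * 3 ^ k"
    using assms(2) by (intro mult_le_mono2 power_increasing) simp_all
  finally show ?thesis unfolding query_cost_def by simp
qed

lemma upd_bound:
  assumes "length P \<le> k"
  shows "upd_cost P \<le> (k+1) * 3^k + 1"
proof -
  have "sum_list (map (\<lambda>A. length A + 1) (subseqs P)) \<le> sum_list (map (\<lambda>A. k + 1) (subseqs P))"
    by (rule sum_list_mono) (use subseqs_len assms in fastforce)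
  also have "\<dots> = 2 ^ length P * (k+1)"
    by (simp add: sum_list_triv length_subseqs)
  also have "\<dots> \<le> 3 ^ k * (k+1)"
  proof -
    have "(2::nat) ^ length P \<le> 3 ^ length P" by (simp add: power_mono)
    also have "\<dots> \<le> 3 ^ k" using assms by (simp add: power_increasing)
    finally show ?thesis by (rule mult_le_mono1)
  qed
  finally show ?thesis unfolding upd_cost_def by (simp add: mult.commute)
qed

lemma pfun_in: "nonI P \<Longrightarrow> j \<in> fst ` set P \<Longrightarrow> pfun P j \<noteq> PI"
proof -
  assume n: "nonI P" and j: "j \<in> fst ` set P"
  then obtain p where "(j,p) \<in> set P" by auto
  then obtain y where y: "map_of P j = Some y" using weak_map_of_SomeI by metis
  then have "(j,y) \<in> set P" by (rule map_of_SomeD)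
  then have "y \<noteq> PI" using n unfolding nonI_def by auto
  then show ?thesis using y by (simp add: pfun_def)
qed

lemma weight_len:
  assumes "distinct (map fst P)" "nonI P"
  shows "weight P = length P"
proof -
  have "{j. pfun P j \<noteq> PI} = fst ` set P" using pfun_in[OF assms(2)] pfun_notin by blast
  then have "weight P = card (set (map fst P))" unfolding weight_def by simp
  also have "\<dots> = length P" using distinct_card[OF assms(1)] by simp
  finally show ?thesis .
qed

theorem corollary2:
  "\<exists>C::nat. \<forall>(n::nat) (k::nat) (Ps::sparse list).
     k \<ge> 1 \<longrightarrow> (\<forall>P\<in>set Ps. valid_sparse n P \<and> weight P \<le> k) \<longrightarrow>
     ((fst (certify Ps) = AllCommute \<and>
        (\<forall>i<length Ps. \<forall>j<length Ps. ops_commute n (Ps ! i) (Ps ! j)))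
      \<or> (\<exists>j i. fst (certify Ps) = Witness j i \<and> j < i \<and> i < length Ps \<and>
              \<not> ops_commute n (Ps ! j) (Ps ! i)))
     \<and> snd (certify Ps) \<le> C * length Ps * k * 3 ^ k + C"
proof (intro exI[of _ 9] allI impI)
  fix n k :: nat and Ps :: "sparse list"
  assume k: "k \<ge> 1" and V: "\<forall>P\<in>set Ps. valid_sparse n P \<and> weight P \<le> k"
  define B where "B = 2 * ((k+1) * 3^k + 1)"
  have ok: "\<forall>Q\<in>set [] \<union> set Ps. okq k Q"
  proof
    fix Q assume "Q \<in> set [] \<union> set Ps"
    then have "valid_sparse n Q" "weight Q \<le> k" using V by auto
    then have d: "distinct (map fst Q)" and nI: "nonI Q"
      by (auto simp: valid_sparse_def nonI_def)
    then show "okq k Q" using weight_len[OF d nI] \<open>weight Q \<le> k\<close> by (simp add: okq_def)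
  qed
  have b: "\<forall>P\<in>set Ps. query_cost P + upd_cost P \<le> B"
  proof
    fix P assume "P \<in> set Ps"
    then have "okq k P" using ok by auto
    then have "nonI P" "length P \<le> k" by (auto simp: okq_def)
    then show "query_cost P + upd_cost P \<le> B" unfolding B_def
      using query_bound upd_bound by fastforce
  qed
  have d0: "dsum [] = (\<lambda>_. 0)" by (simp add: dsum_def)
  have L: "((fst (certify Ps) = AllCommute \<and>
           (\<forall>Q\<in>set Ps. \<forall>Q'\<in>set Ps. even (card (conf Q Q'))))
    \<or> (\<exists>j i. fst (certify Ps) = Witness j i \<and> j < i \<and> i < length Ps
          \<and> odd (card (conf (Ps!j) (Ps!i)))))
   \<and> snd (certify Ps) \<le> length Ps * B + length Ps * (2*k+1) + 1"
    using loop[OF ok _ b] unfolding certify_def d0 by simp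
  have vi: "valid_sparse n (Ps ! i)" if "i < length Ps" for i using V that by auto
  have part1: "(fst (certify Ps) = AllCommute \<and>
        (\<forall>i<length Ps. \<forall>j<length Ps. ops_commute n (Ps ! i) (Ps ! j)))
      \<or> (\<exists>j i. fst (certify Ps) = Witness j i \<and> j < i \<and> i < length Ps \<and>
              \<not> ops_commute n (Ps ! j) (Ps ! i))"
    using conjunct1[OF L]
  proof (elim disjE)
    assume a: "fst (certify Ps) = AllCommute \<and> (\<forall>Q\<in>set Ps. \<forall>Q'\<in>set Ps. even (card (conf Q Q')))"
    have "\<forall>i<length Ps. \<forall>j<length Ps. ops_commute n (Ps ! i) (Ps ! j)"
      using a even_comm vi by (metis nth_mem)
    then show ?thesis using a by blast
  next
    assume "\<exists>j i. fst (certify Ps) = Witness j i \<and> j < i \<and> i < length Ps \<and> odd (card (conf (Ps!j) (Ps!i)))"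
    then obtain j i where a: "fst (certify Ps) = Witness j i" "j < i" "i < length Ps" "odd (card (conf (Ps!j) (Ps!i)))"
      by blast
    have "\<not> ops_commute n (Ps ! j) (Ps ! i)" using odd_noncomm[OF vi a(4)] a by simp
    then show ?thesis using a by blast
  qed
  define T where "T = k * 3^k"
  have T1: "1 \<le> T" using k unfolding T_def by (simp add: Suc_le_eq)
  have "(k+1) * 3^k \<le> 2 * T" unfolding T_def using k by (simp add: algebra_simps)
  then have BT: "B \<le> 6 * T" unfolding B_def using T1 by simp
  have "k \<le> T" unfolding T_def by simp
  then have kT: "2*k+1 \<le> 3 * T" using k by linarith
  have "length Ps * B + length Ps * (2*k+1) + 1 \<le> length Ps * (6*T) + length Ps * (3*T) + 1"
    using BT kT by (intro add_mono mult_le_mono) auto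
  also have "\<dots> \<le> 9 * length Ps * k * 3 ^ k + 9" unfolding T_def by (simp add: algebra_simps)
  finally have "snd (certify Ps) \<le> 9 * length Ps * k * 3 ^ k + 9" using L by linarith
  then show "((fst (certify Ps) = AllCommute \<and>
        (\<forall>i<length Ps. \<forall>j<length Ps. ops_commute n (Ps ! i) (Ps ! j)))
      \<or> (\<exists>j i. fst (certify Ps) = Witness j i \<and> j < i \<and> i < length Ps \<and>
              \<not> ops_commute n (Ps ! j) (Ps ! i)))
     \<and> snd (certify Ps) \<le> 9 * length Ps * k * 3 ^ k + 9" using part1 by blast
qed

end
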